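(* Let $R$ be a commutative ring with unity, $\lambda$ a length function on $R$-modules, $S=R[x_1,\dots,x_k]$, and let $\bar N=(N_n)_{n\in\mathbb{N}}$ be an increasing filtering of the $S$-module $N$ with degrees $\bar\gamma\in\mathbb{N}^k$. Let $F_{\bar N}(t)=\sum_{n=0}^\infty\lambda(N_n)t^n$. Then $F_{\bar N}=F_{\mathrm{Rees}(\bar N)}$. Consequently, if $\gamma_i>0$ for $i=1,\dots,k$, $\lambda(N_n)<\infty$ for every $n$, and $\mathrm{Rees}(\bar N)$ is Noetherian as an $S[y]$-module, then there is a polynomial $p(t)\in\mathbb{R}[t]$ with \[F_{\bar N}(t)=\frac{p(t)}{(1-t)\prod_{i=1}^k(1-t^{\gamma_i})}.\]
   Context: A length function on $R$-modules is a function $\lambda$ from $R$-modules to $\mathbb{R}_{\ge0}\cup\{\infty\}$ with $\lambda(0)=0$, invariant under isomorphism, additive on short exact sequences, and with $\lambda(M)=\sup\{\lambda(M'):M'\le M$ finitely generated$\}$. An increasing filtering of an $S$-module $N$ with degrees $\bar\gamma=(\gamma_1,\dots,\gamma_k)\in\mathbb{N}^k$ is an increasing sequence of $R$-submodules $N_0\le N_1\le\dots$ with $\bigcup_iN_i=N$ and $x_iN_j\subseteq N_{j+\gamma_i}$ for all $j\in\mathbb{N}$, $i\le k$. Its blow-up $\mathrm{Rees}(\bar N)=\bigoplus_{n\in\mathbb{N}}N_ny^n$ is the graded $S[y]$-module with grading given by this decomposition, with $x_i(vy^j)=(x_iv)y^{j+\gamma_i}$ (so $x_i$ has degree $\gamma_i$)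 and $y(vy^j)=vy^{j+1}$ (so $y$ has degree $1$) for $v\in N_j$, extended $R$-linearly. For an $\mathbb{N}$-graded module $\bar M=\bigoplus M_n$, $F_{\bar M}(t)=\sum_n\lambda(M_n)t^n$. *)

theory Defs
  imports "HOL-Algebra.Module" "HOL-Computational_Algebra.Polynomial_FPS"
    "HOL-Library.Extended_Nonnegative_Real"
begin

definition mod_hom :: "('r, 'x) ring_scheme \<Rightarrow> ('r, 'a) module \<Rightarrow> ('r, 'b) module \<Rightarrow> ('a \<Rightarrow> 'b) \<Rightarrow> bool"
  where "mod_hom R A B f \<longleftrightarrow>
     (\<forall>x\<in>carrier A. f x \<in> carrier B) \<and>
     (\<forall>x\<in>carrier A. \<forall>y\<in>carrier A. f (x \<oplus>\<^bsub>A\<^esub> y) = f x \<oplus>\<^bsub>B\<^esub> f y) \<and>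
     (\<forall>r\<in>carrier R. \<forall>x\<in>carrier A. f (r \<odot>\<^bsub>A\<^esub> x) = r \<odot>\<^bsub>B\<^esub> f x)"

definition mod_iso :: "('r, 'x) ring_scheme \<Rightarrow> ('r, 'a) module \<Rightarrow> ('r, 'b) module \<Rightarrow> bool"
  where "mod_iso R A B \<longleftrightarrow> (\<exists>f. mod_hom R A B f \<and> bij_betw f (carrier A) (carrier B))"

definition mod_span :: "('r, 'x) ring_scheme \<Rightarrow> ('r, 'a) module \<Rightarrow> 'a set \<Rightarrow> 'a set"
  where "mod_span R M G = \<Inter>{Q. submodule Q R M \<and> G \<subseteq> Q}"

definition fin_gen_submodule :: "('r, 'x) ring_scheme \<Rightarrow> ('r, 'a) module \<Rightarrow> 'a set \<Rightarrow> bool"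
  where "fin_gen_submodule R M P \<longleftrightarrow>
     submodule P R M \<and> (\<exists>G. finite G \<and> G \<subseteq> carrier M \<and> P = mod_span R M G)"

abbreviation submod :: "('r, 'a) module \<Rightarrow> 'a set \<Rightarrow> ('r, 'a) module"
  where "submod M P \<equiv> M\<lparr>carrier := P\<rparr>"

text \<open>A length function on the R-modules whose elements live in the HOL type of the
  modules given to lam (values in [0,\<infinity>] = ennreal).\<close>
definition length_function :: "'r ring \<Rightarrow> (('r, 'a) module \<Rightarrow> ennreal) \<Rightarrow> bool"
  where "length_function R lam \<longleftrightarrow>
     (\<forall>M. Module.module R M \<and> carrier M = {\<zero>\<^bsub>M\<^esub>} \<longrightarrow> lam M = 0) \<and>
     (\<forall>A B. Module.module R A \<and> Module.module R B \<and> mod_iso R A B \<longrightarrow> lam A = lam B) \<and>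
     (\<forall>A B C f g. Module.module R A \<and> Module.module R B \<and> Module.module R C \<and>
        mod_hom R A B f \<and> mod_hom R B C g \<and> inj_on f (carrier A) \<and>
        g ` carrier B = carrier C \<and>
        f ` carrier A = {x \<in> carrier B. g x = \<zero>\<^bsub>C\<^esub>}
        \<longrightarrow> lam B = lam A + lam C) \<and>
     (\<forall>M. Module.module R M \<longrightarrow>
        lam M = (SUP P\<in>{P. fin_gen_submodule R M P}. lam (submod M P)))"

text \<open>Two length functions (on two HOL types of modules) which are restrictions of one
  length function on all R-modules: they agree on isomorphic modules.\<close>
definition length_compatible :: "'r ring \<Rightarrow> (('r, 'a) module \<Rightarrow> ennreal) \<Rightarrow> (('r, 'b) module \<Rightarrow> ennreal) \<Rightarrow> bool"
  where "length_compatible R lam1 lam2 \<longleftrightarrow>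
     (\<forall>A B. Module.module R A \<and> Module.module R B \<and> mod_iso R A B \<longrightarrow> lam1 A = lam2 B)"

text \<open>An S-module for S = R[x_0,...,x_{k-1}] is an R-module N together with k pairwise
  commuting R-linear endomorphisms X 0, ..., X (k-1) (the actions of the variables).\<close>
definition poly_module :: "'r ring \<Rightarrow> ('r, 'a) module \<Rightarrow> nat \<Rightarrow> (nat \<Rightarrow> 'a \<Rightarrow> 'a) \<Rightarrow> bool"
  where "poly_module R N k X \<longleftrightarrow> Module.module R N \<and>
     (\<forall>i<k. mod_hom R N N (X i)) \<and>
     (\<forall>i<k. \<forall>j<k. \<forall>v\<in>carrier N. X i (X j v) = X j (X i v))"

definition incr_filtering ::
  "'r ring \<Rightarrow> ('r, 'a) module \<Rightarrow> nat \<Rightarrow> (nat \<Rightarrow> 'a \<Rightarrow> 'a) \<Rightarrow> (nat \<Rightarrow> nat) \<Rightarrow> (nat \<Rightarrow> 'a set) \<Rightarrow> bool"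
  where "incr_filtering R N k X \<gamma> Nf \<longleftrightarrow>
     (\<forall>n. submodule (Nf n) R N) \<and> (\<forall>n. Nf n \<subseteq> Nf (Suc n)) \<and>
     (\<Union>n. Nf n) = carrier N \<and>
     (\<forall>i<k. \<forall>j. X i ` Nf j \<subseteq> Nf (j + \<gamma> i))"

text \<open>The blow-up Rees(Nf) = \<Oplus>_n N_n y^n, realised as finitely supported sequences
  f with f n \<in> N_n (f n is the coefficient of y^n).\<close>
definition rees :: "('r, 'a) module \<Rightarrow> (nat \<Rightarrow> 'a set) \<Rightarrow> ('r, nat \<Rightarrow> 'a) module"
  where "rees N Nf =
    \<lparr>carrier = {f. (\<forall>n. f n \<in> Nf n) \<and> finite {n. f n \<noteq> \<zero>\<^bsub>N\<^esub>}},
     monoid.mult = (\<lambda>f g n. f n \<otimes>\<^bsub>N\<^esub> g n),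
     monoid.one = (\<lambda>n. \<one>\<^bsub>N\<^esub>),
     ring.zero = (\<lambda>n. \<zero>\<^bsub>N\<^esub>),
     ring.add = (\<lambda>f g n. f n \<oplus>\<^bsub>N\<^esub> g n),
     module.smult = (\<lambda>r f n. r \<odot>\<^bsub>N\<^esub> f n)\<rparr>"

text \<open>Action of x_i on Rees: x_i (v y^j) = (x_i v) y^(j + gamma_i).\<close>
definition rees_X :: "('r, 'a) module \<Rightarrow> (nat \<Rightarrow> 'a \<Rightarrow> 'a) \<Rightarrow> (nat \<Rightarrow> nat) \<Rightarrow> nat \<Rightarrow> (nat \<Rightarrow> 'a) \<Rightarrow> (nat \<Rightarrow> 'a)"
  where "rees_X N X \<gamma> i f = (\<lambda>n. if \<gamma> i \<le> n then X i (f (n - \<gamma> i)) else \<zero>\<^bsub>N\<^esub>)"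

text \<open>Action of y on Rees: y (v y^j) = v y^(j+1).\<close>
definition rees_Y :: "('r, 'a) module \<Rightarrow> (nat \<Rightarrow> 'a) \<Rightarrow> (nat \<Rightarrow> 'a)"
  where "rees_Y N f = (\<lambda>n. if 1 \<le> n then f (n - 1) else \<zero>\<^bsub>N\<^esub>)"

text \<open>The variables of S[y] = R[x_0..x_{k-1}, y] acting on Rees: index i<k is x_i, index k is y.\<close>
definition rees_ops :: "('r, 'a) module \<Rightarrow> nat \<Rightarrow> (nat \<Rightarrow> 'a \<Rightarrow> 'a) \<Rightarrow> (nat \<Rightarrow> nat) \<Rightarrow> nat \<Rightarrow> (nat \<Rightarrow> 'a) \<Rightarrow> (nat \<Rightarrow> 'a)"
  where "rees_ops N k X \<gamma> i = (if i < k then rees_X N X \<gamma> i else rees_Y N)"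

definition rees_component :: "('r, 'a) module \<Rightarrow> (nat \<Rightarrow> 'a set) \<Rightarrow> nat \<Rightarrow> (nat \<Rightarrow> 'a) set"
  where "rees_component N Nf n = {f \<in> carrier (rees N Nf). \<forall>m. m \<noteq> n \<longrightarrow> f m = \<zero>\<^bsub>N\<^esub>}"

definition poly_submodule :: "'r ring \<Rightarrow> ('r, 'a) module \<Rightarrow> nat \<Rightarrow> (nat \<Rightarrow> 'a \<Rightarrow> 'a) \<Rightarrow> 'a set \<Rightarrow> bool"
  where "poly_submodule R M m Y P \<longleftrightarrow> submodule P R M \<and> (\<forall>i<m. Y i ` P \<subseteq> P)"

definition poly_span :: "'r ring \<Rightarrow> ('r, 'a) module \<Rightarrow> nat \<Rightarrow> (nat \<Rightarrow> 'a \<Rightarrow> 'a) \<Rightarrow> 'a set \<Rightarrow> 'a set"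
  where "poly_span R M m Y G = \<Inter>{Q. poly_submodule R M m Y Q \<and> G \<subseteq> Q}"

definition noetherian_poly_module :: "'r ring \<Rightarrow> ('r, 'a) module \<Rightarrow> nat \<Rightarrow> (nat \<Rightarrow> 'a \<Rightarrow> 'a) \<Rightarrow> bool"
  where "noetherian_poly_module R M m Y \<longleftrightarrow>
     (\<forall>P. poly_submodule R M m Y P \<longrightarrow>
        (\<exists>G. finite G \<and> G \<subseteq> P \<and> P = poly_span R M m Y G))"

end

theory Submission
  imports Defs
begin

lemma submodI':
  assumes M: "Module.module R M" and sub: "H \<subseteq> carrier M" and z: "\<zero>\<^bsub>M\<^esub> \<in> H"
    and add: "\<And>a b. a \<in> H \<Longrightarrow> b \<in> H \<Longrightarrow> a \<oplus>\<^bsub>M\<^esub> b \<in> H"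
    and sm: "\<And>r a. r \<in> carrier R \<Longrightarrow> a \<in> H \<Longrightarrow> r \<odot>\<^bsub>M\<^esub> a \<in> H"
  shows "submodule H R M"
proof -
  interpret Module.module R M by (rule M)
  show ?thesis
  proof (rule submoduleI[OF sub z _ add sm])
    fix a assume a: "a \<in> H"
    then have ac: "a \<in> carrier M" using sub by auto
    have "\<ominus>\<^bsub>M\<^esub> a = (\<ominus>\<^bsub>R\<^esub> \<one>\<^bsub>R\<^esub>) \<odot>\<^bsub>M\<^esub> a"
      using smult_l_minus[of "\<one>\<^bsub>R\<^esub>" a] ac by simp
    then show "\<ominus>\<^bsub>M\<^esub> a \<in> H" using sm[OF _ a] by simp
  qed
qed

lemma submod_sub:
  assumes M: "Module.module R M" and P: "submodule P R M"
  shows "submodule Q R (submod M P) \<longleftrightarrow> submodule Q R M \<and> Q \<subseteq> P"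
proof
  interpret Module.module R M by (rule M)
  have MP: "Module.module R (submod M P)" using submodule.submodule_is_module[OF P M] .
  assume Q: "submodule Q R (submod M P)"
  have QP: "Q \<subseteq> P" using module.submoduleE(1)[OF MP Q] by simp
  have "Module.module R (submod (submod M P) Q)" using submodule.submodule_is_module[OF Q MP] .
  then have "Module.module R (submod M Q)" by simp
  moreover have "Q \<subseteq> carrier M" using QP submoduleE(1)[OF P] by auto
  ultimately show "submodule Q R M \<and> Q \<subseteq> P" using module_incl_imp_submodule QP by auto
next
  interpret Module.module R M by (rule M)
  have MP: "Module.module R (submod M P)" using submodule.submodule_is_module[OF P M] .
  assume Q: "submodule Q R M \<and> Q \<subseteq> P"
  have "Module.module R (submod M Q)" using submodule.submodule_is_module[OF _ M] Q by auto
  then have "Module.module R (submod (submod M P) Q)" by simp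
  then show "submodule Q R (submod M P)" using module.module_incl_imp_submodule[OF MP] Q by simp
qed

lemma span_submodule:
  assumes M: "Module.module R M" and G: "G \<subseteq> carrier M"
  shows "submodule (mod_span R M G) R M"
proof -
  interpret Module.module R M by (rule M)
  let ?F = "{Q. submodule Q R M \<and> G \<subseteq> Q}"
  have cF: "carrier M \<in> ?F" using carrier_is_submodule G by auto
  show ?thesis unfolding mod_span_def
  proof (rule submoduleI)
    show "\<Inter> ?F \<subseteq> carrier M" using cF by auto
    show "\<zero>\<^bsub>M\<^esub> \<in> \<Inter> ?F"
      using submoduleE(2) by (auto intro: subgroup.one_closed[OF submodule.axioms(1), simplified])
  next
    fix a assume "a \<in> \<Inter> ?F" then show "\<ominus>\<^bsub>M\<^esub> a \<in> \<Inter> ?F" using submoduleE(3) by auto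
  next
    fix a b assume "a \<in> \<Inter> ?F" "b \<in> \<Inter> ?F" then show "a \<oplus>\<^bsub>M\<^esub> b \<in> \<Inter> ?F" using submoduleE(5) by auto
  next
    fix a x assume "a \<in> carrier R" "x \<in> \<Inter> ?F" then show "a \<odot>\<^bsub>M\<^esub> x \<in> \<Inter> ?F" using submoduleE(4) by auto
  qed
qed

lemma span_in_sub:
  assumes M: "Module.module R M" and P: "submodule P R M" and G: "G \<subseteq> P"
  shows "mod_span R (submod M P) G = mod_span R M G"
proof -
  interpret Module.module R M by (rule M)
  have Gc: "G \<subseteq> carrier M" using G submoduleE(1)[OF P] by auto
  have S: "submodule (mod_span R M G) R M" using span_submodule[OF M Gc] .
  have SP: "mod_span R M G \<subseteq> P" unfolding mod_span_def using P G by auto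
  have "mod_span R (submod M P) G = \<Inter>{Q. (submodule Q R M \<and> Q \<subseteq> P) \<and> G \<subseteq> Q}"
    unfolding mod_span_def using submod_sub[OF M P] by simp
  also have "\<dots> = mod_span R M G"
  proof
    show "\<Inter>{Q. (submodule Q R M \<and> Q \<subseteq> P) \<and> G \<subseteq> Q} \<subseteq> mod_span R M G"
      using S SP by (intro Inter_lower) (auto simp: mod_span_def)
    show "mod_span R M G \<subseteq> \<Inter>{Q. (submodule Q R M \<and> Q \<subseteq> P) \<and> G \<subseteq> Q}"
      unfolding mod_span_def by auto
  qed
  finally show ?thesis .
qed

lemma lam_mono:
  assumes lam: "length_function R lam" and M: "Module.module R M"
    and P: "submodule P R M" and Q: "submodule Q R M" and PQ: "P \<subseteq> Q"
  shows "lam (submod M P) \<le> lam (submod M Q)"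
proof -
  have MP: "Module.module R (submod M P)" using submodule.submodule_is_module[OF P M] .
  have MQ: "Module.module R (submod M Q)" using submodule.submodule_is_module[OF Q M] .
  have ax: "\<And>M. Module.module R M \<Longrightarrow> lam M = (SUP P\<in>{P. fin_gen_submodule R M P}. lam (submod M P))"
    using lam unfolding length_function_def by blast
  have sub: "{S. fin_gen_submodule R (submod M P) S} \<subseteq> {S. fin_gen_submodule R (submod M Q) S}"
  proof
    fix S assume "S \<in> {S. fin_gen_submodule R (submod M P) S}"
    then obtain G where S: "submodule S R (submod M P)" and G: "finite G" "G \<subseteq> P"
      and SG: "S = mod_span R (submod M P) G"
      unfolding fin_gen_submodule_def by auto
    have S1: "submodule S R M" "S \<subseteq> P" using submod_sub[OF M P] S by auto
    have "S = mod_span R M G" using SG span_in_sub[OF M P G(2)] by simp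
    also have "\<dots> = mod_span R (submod M Q) G" using span_in_sub[OF M Q] G PQ by auto
    finally show "S \<in> {S. fin_gen_submodule R (submod M Q) S}"
      unfolding fin_gen_submodule_def using submod_sub[OF M Q] S1 PQ G by (auto intro!: exI[of _ G])
  qed
  have "lam (submod M P) = (SUP S\<in>{S. fin_gen_submodule R (submod M P) S}. lam (submod M S))"
    using ax[OF MP] by simp
  also have "\<dots> \<le> (SUP S\<in>{S. fin_gen_submodule R (submod M Q) S}. lam (submod M S))"
    by (rule SUP_subset_mono[OF sub]) simp
  also have "\<dots> = lam (submod M Q)" using ax[OF MQ] by simp
  finally show ?thesis .
qed


section \<open>The Rees module\<close>

locale hs =
  fixes R :: "'r ring" and N :: "('r, 'm) module" and k :: nat
    and X :: "nat \<Rightarrow> 'm \<Rightarrow> 'm" and \<gamma> :: "nat \<Rightarrow> nat" and Nf :: "nat \<Rightarrow> 'm set"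
  assumes N: "poly_module R N k X"
    and filt: "incr_filtering R N k X \<gamma> Nf"
begin

abbreviation "M \<equiv> rees N Nf"
abbreviation "z \<equiv> \<zero>\<^bsub>N\<^esub>"

lemma NM: "Module.module R N" using N unfolding poly_module_def by auto

sublocale Nmod: Module.module R N by (rule NM)

lemma Nf_sub: "submodule (Nf n) R N" using filt unfolding incr_filtering_def by auto

lemma Nf_car: "x \<in> Nf n \<Longrightarrow> x \<in> carrier N"
  using Nmod.submoduleE(1)[OF Nf_sub] by auto

lemma Nf_zero: "z \<in> Nf n"
  using subgroup.one_closed[OF submodule.axioms(1)[OF Nf_sub]] by simp

lemma Nf_add: "x \<in> Nf n \<Longrightarrow> y \<in> Nf n \<Longrightarrow> x \<oplus>\<^bsub>N\<^esub> y \<in> Nf n"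
  using Nmod.submoduleE(5)[OF Nf_sub] by auto

lemma Nf_neg: "x \<in> Nf n \<Longrightarrow> \<ominus>\<^bsub>N\<^esub> x \<in> Nf n"
  using Nmod.submoduleE(3)[OF Nf_sub] by auto

lemma Nf_smult: "r \<in> carrier R \<Longrightarrow> x \<in> Nf n \<Longrightarrow> r \<odot>\<^bsub>N\<^esub> x \<in> Nf n"
  using Nmod.submoduleE(4)[OF Nf_sub] by auto

lemma Nf_mono: "m \<le> n \<Longrightarrow> Nf m \<subseteq> Nf n"
proof (induction n)
  case 0 then show ?case by simp
next
  case (Suc n)
  have "Nf n \<subseteq> Nf (Suc n)" using filt unfolding incr_filtering_def by auto
  then show ?case using Suc by (cases "m = Suc n") auto
qed

lemma X_hom: "i < k \<Longrightarrow> mod_hom R N N (X i)"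
  using N unfolding poly_module_def by auto

lemma X_car: "i < k \<Longrightarrow> x \<in> carrier N \<Longrightarrow> X i x \<in> carrier N"
  using X_hom unfolding mod_hom_def by auto

lemma X_add: "i < k \<Longrightarrow> x \<in> carrier N \<Longrightarrow> y \<in> carrier N \<Longrightarrow> X i (x \<oplus>\<^bsub>N\<^esub> y) = X i x \<oplus>\<^bsub>N\<^esub> X i y"
  using X_hom unfolding mod_hom_def by auto

lemma X_smult: "i < k \<Longrightarrow> r \<in> carrier R \<Longrightarrow> x \<in> carrier N \<Longrightarrow> X i (r \<odot>\<^bsub>N\<^esub> x) = r \<odot>\<^bsub>N\<^esub> X i x"
  using X_hom unfolding mod_hom_def by auto

lemma X_zero: "i < k \<Longrightarrow> X i z = z"
proof -
  assume i: "i < k"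
  have "X i (z \<oplus>\<^bsub>N\<^esub> z) = X i z \<oplus>\<^bsub>N\<^esub> X i z" using X_add[OF i, of z z] by simp
  then have "X i z = X i z \<oplus>\<^bsub>N\<^esub> X i z" by simp
  then show ?thesis using X_car[OF i] Nmod.add.l_cancel_one' by (metis Nmod.zero_closed)
qed

lemma X_comm: "i < k \<Longrightarrow> j < k \<Longrightarrow> v \<in> carrier N \<Longrightarrow> X i (X j v) = X j (X i v)"
  using N unfolding poly_module_def by auto

lemma X_Nf: "i < k \<Longrightarrow> x \<in> Nf j \<Longrightarrow> X i x \<in> Nf (j + \<gamma> i)"
  using filt unfolding incr_filtering_def by blast

lemma M_car: "f \<in> carrier M \<longleftrightarrow> (\<forall>n. f n \<in> Nf n) \<and> finite {n. f n \<noteq> z}"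
  by (simp add: rees_def)

lemma M_add: "f \<oplus>\<^bsub>M\<^esub> g = (\<lambda>n. f n \<oplus>\<^bsub>N\<^esub> g n)" by (simp add: rees_def)
lemma M_zero: "\<zero>\<^bsub>M\<^esub> = (\<lambda>n. z)" by (simp add: rees_def)
lemma M_smult: "r \<odot>\<^bsub>M\<^esub> f = (\<lambda>n. r \<odot>\<^bsub>N\<^esub> f n)" by (simp add: rees_def)

lemma M_car_N: "f \<in> carrier M \<Longrightarrow> f n \<in> carrier N"
  using M_car Nf_car by blast

lemma M_car_Nf: "f \<in> carrier M \<Longrightarrow> f n \<in> Nf n"
  using M_car by blast

lemma M_add_car: "f \<in> carrier M \<Longrightarrow> g \<in> carrier M \<Longrightarrow> f \<oplus>\<^bsub>M\<^esub> g \<in> carrier M"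
proof -
  assume f: "f \<in> carrier M" and g: "g \<in> carrier M"
  have "{n. f n \<oplus>\<^bsub>N\<^esub> g n \<noteq> z} \<subseteq> {n. f n \<noteq> z} \<union> {n. g n \<noteq> z}"
    using M_car_N[OF f] M_car_N[OF g] by auto
  then show ?thesis using f g unfolding M_car M_add by (auto intro: Nf_add finite_subset)
qed

lemma M_smult_car: "r \<in> carrier R \<Longrightarrow> f \<in> carrier M \<Longrightarrow> r \<odot>\<^bsub>M\<^esub> f \<in> carrier M"
proof -
  assume r: "r \<in> carrier R" and f: "f \<in> carrier M"
  have "{n. r \<odot>\<^bsub>N\<^esub> f n \<noteq> z} \<subseteq> {n. f n \<noteq> z}"
    using r by auto
  then show ?thesis using f r unfolding M_car M_smult by (auto intro: Nf_smult finite_subset)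
qed

lemma M_zero_car: "\<zero>\<^bsub>M\<^esub> \<in> carrier M"
  unfolding M_car M_zero using Nf_zero by auto

lemma M_negf_car: "f \<in> carrier M \<Longrightarrow> (\<lambda>n. \<ominus>\<^bsub>N\<^esub> f n) \<in> carrier M"
proof -
  assume f: "f \<in> carrier M"
  have "{n. \<ominus>\<^bsub>N\<^esub> f n \<noteq> z} \<subseteq> {n. f n \<noteq> z}"
    using M_car_N[OF f] by auto
  then show ?thesis using f unfolding M_car by (auto intro: Nf_neg finite_subset)
qed

lemma MM: "Module.module R M"
proof (rule moduleI)
  show "cring R" using Nmod.is_cring .
  show "abelian_group M"
  proof (rule abelian_groupI)
    fix x y assume "x \<in> carrier M" "y \<in> carrier M" then show "x \<oplus>\<^bsub>M\<^esub> y \<in> carrier M" by (rule M_add_car)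
  next
    show "\<zero>\<^bsub>M\<^esub> \<in> carrier M" by (rule M_zero_car)
  next
    fix x y w assume "x \<in> carrier M" "y \<in> carrier M" "w \<in> carrier M"
    then show "x \<oplus>\<^bsub>M\<^esub> y \<oplus>\<^bsub>M\<^esub> w = x \<oplus>\<^bsub>M\<^esub> (y \<oplus>\<^bsub>M\<^esub> w)"
      unfolding M_add by (auto intro!: ext simp: M_car_N Nmod.a_assoc)
  next
    fix x y assume "x \<in> carrier M" "y \<in> carrier M"
    then show "x \<oplus>\<^bsub>M\<^esub> y = y \<oplus>\<^bsub>M\<^esub> x"
      unfolding M_add by (auto intro!: ext simp: M_car_N Nmod.a_comm)
  next
    fix x assume "x \<in> carrier M"
    then show "\<zero>\<^bsub>M\<^esub> \<oplus>\<^bsub>M\<^esub> x = x"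
      unfolding M_add M_zero by (auto intro!: ext simp: M_car_N)
  next
    fix x assume x: "x \<in> carrier M"
    show "\<exists>y\<in>carrier M. y \<oplus>\<^bsub>M\<^esub> x = \<zero>\<^bsub>M\<^esub>"
      using M_negf_car[OF x] x unfolding M_add M_zero
      by (intro bexI[of _ "\<lambda>n. \<ominus>\<^bsub>N\<^esub> x n"]) (auto intro!: ext simp: M_car_N Nmod.l_neg)
  qed
next
  fix a x assume "a \<in> carrier R" "x \<in> carrier M" then show "a \<odot>\<^bsub>M\<^esub> x \<in> carrier M" by (rule M_smult_car)
next
  fix a b x assume "a \<in> carrier R" "b \<in> carrier R" "x \<in> carrier M"
  then show "(a \<oplus>\<^bsub>R\<^esub> b) \<odot>\<^bsub>M\<^esub> x = a \<odot>\<^bsub>M\<^esub> x \<oplus>\<^bsub>M\<^esub> b \<odot>\<^bsub>M\<^esub> x"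
    unfolding M_add M_smult by (auto intro!: ext simp: M_car_N Nmod.smult_l_distr)
next
  fix a x y assume "a \<in> carrier R" "x \<in> carrier M" "y \<in> carrier M"
  then show "a \<odot>\<^bsub>M\<^esub> (x \<oplus>\<^bsub>M\<^esub> y) = a \<odot>\<^bsub>M\<^esub> x \<oplus>\<^bsub>M\<^esub> a \<odot>\<^bsub>M\<^esub> y"
    unfolding M_add M_smult by (auto intro!: ext simp: M_car_N Nmod.smult_r_distr)
next
  fix a b x assume "a \<in> carrier R" "b \<in> carrier R" "x \<in> carrier M"
  then show "(a \<otimes>\<^bsub>R\<^esub> b) \<odot>\<^bsub>M\<^esub> x = a \<odot>\<^bsub>M\<^esub> (b \<odot>\<^bsub>M\<^esub> x)"
    unfolding M_smult by (auto intro!: ext simp: M_car_N Nmod.smult_assoc1)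
next
  fix x assume "x \<in> carrier M"
  then show "\<one>\<^bsub>R\<^esub> \<odot>\<^bsub>M\<^esub> x = x"
    unfolding M_smult by (auto intro!: ext simp: M_car_N)
qed

sublocale Mmod: Module.module R M by (rule MM)

lemma M_neg: "f \<in> carrier M \<Longrightarrow> \<ominus>\<^bsub>M\<^esub> f = (\<lambda>n. \<ominus>\<^bsub>N\<^esub> f n)"
proof -
  assume f: "f \<in> carrier M"
  have "(\<lambda>n. \<ominus>\<^bsub>N\<^esub> f n) \<oplus>\<^bsub>M\<^esub> f = \<zero>\<^bsub>M\<^esub>"
    unfolding M_add M_zero using f by (auto intro!: ext simp: M_car_N Nmod.l_neg)
  then show ?thesis using Mmod.minus_equality M_negf_car[OF f] f by metis
qed


definition pj :: "nat \<Rightarrow> (nat \<Rightarrow> 'm) \<Rightarrow> (nat \<Rightarrow> 'm)" where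
  "pj n f = (\<lambda>m. if m = n then f n else z)"
definition cmp :: "(nat \<Rightarrow> 'm) set \<Rightarrow> nat \<Rightarrow> (nat \<Rightarrow> 'm) set" where
  "cmp P n = {f \<in> P. \<forall>m. m \<noteq> n \<longrightarrow> f m = z}"
definition graded :: "(nat \<Rightarrow> 'm) set \<Rightarrow> bool" where
  "graded P \<longleftrightarrow> (\<forall>f\<in>P. \<forall>n. pj n f \<in> P)"
abbreviation "ops \<equiv> rees_ops N k X \<gamma>"
definition deg :: "nat \<Rightarrow> nat" where "deg i = (if i < k then \<gamma> i else 1)"
definition Xe :: "nat \<Rightarrow> 'm \<Rightarrow> 'm" where "Xe i = (if i < k then X i else id)"

lemma ops_eq: "ops i f = (\<lambda>n. if deg i \<le> n then Xe i (f (n - deg i)) else z)"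
  by (auto simp: rees_ops_def rees_X_def rees_Y_def deg_def Xe_def)

lemma Xe_Nf: "i < Suc k \<Longrightarrow> x \<in> Nf j \<Longrightarrow> Xe i x \<in> Nf (j + deg i)"
  using X_Nf Nf_mono[of j "j+1"] by (auto simp: Xe_def deg_def)
lemma Xe_car: "i < Suc k \<Longrightarrow> x \<in> carrier N \<Longrightarrow> Xe i x \<in> carrier N"
  using X_car by (auto simp: Xe_def)
lemma Xe_add: "i < Suc k \<Longrightarrow> x \<in> carrier N \<Longrightarrow> y \<in> carrier N \<Longrightarrow> Xe i (x \<oplus>\<^bsub>N\<^esub> y) = Xe i x \<oplus>\<^bsub>N\<^esub> Xe i y"
  using X_add by (auto simp: Xe_def)
lemma Xe_smult: "i < Suc k \<Longrightarrow> r \<in> carrier R \<Longrightarrow> x \<in> carrier N \<Longrightarrow> Xe i (r \<odot>\<^bsub>N\<^esub> x) = r \<odot>\<^bsub>N\<^esub> Xe i x"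
  using X_smult by (auto simp: Xe_def)
lemma Xe_zero: "Xe i z = z"
  using X_zero by (auto simp: Xe_def)
lemma Xe_comm: "i < Suc k \<Longrightarrow> j < Suc k \<Longrightarrow> v \<in> carrier N \<Longrightarrow> Xe i (Xe j v) = Xe j (Xe i v)"
  using X_comm by (auto simp: Xe_def)

lemma pj_car: "f \<in> carrier M \<Longrightarrow> pj n f \<in> carrier M"
proof -
  assume f: "f \<in> carrier M"
  have "{m. pj n f m \<noteq> z} \<subseteq> {n}" by (auto simp: pj_def)
  then show ?thesis using f Nf_zero unfolding M_car by (auto simp: pj_def intro: finite_subset)
qed

lemma pj_add: "f \<in> carrier M \<Longrightarrow> g \<in> carrier M \<Longrightarrow> pj n (f \<oplus>\<^bsub>M\<^esub> g) = pj n f \<oplus>\<^bsub>M\<^esub> pj n g"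
  by (auto intro!: ext simp: pj_def M_add)

lemma pj_smult: "r \<in> carrier R \<Longrightarrow> pj n (r \<odot>\<^bsub>M\<^esub> f) = r \<odot>\<^bsub>M\<^esub> pj n f"
  by (auto intro!: ext simp: pj_def M_smult)

lemma pj_zero: "pj n \<zero>\<^bsub>M\<^esub> = \<zero>\<^bsub>M\<^esub>"
  by (auto intro!: ext simp: pj_def M_zero)

lemma neg_z: "\<ominus>\<^bsub>N\<^esub> z = z"
  using Nmod.add.inv_one by simp
thm Nmod.add.inv_one

lemma pj_neg: "f \<in> carrier M \<Longrightarrow> pj n (\<ominus>\<^bsub>M\<^esub> f) = \<ominus>\<^bsub>M\<^esub> pj n f"
proof -
  assume f: "f \<in> carrier M"
  have "pj n f \<in> carrier M" using pj_car[OF f] .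
  then show ?thesis using M_neg[OF f] by (simp add: M_neg) (auto intro!: ext simp: pj_def neg_z)
qed

lemma pj_pj: "pj m (pj n f) = (if m = n then pj n f else \<zero>\<^bsub>M\<^esub>)"
  by (auto intro!: ext simp: pj_def M_zero)

lemma cmp_pj: "f \<in> cmp P n \<Longrightarrow> pj m f = (if m = n then f else \<zero>\<^bsub>M\<^esub>)"
  by (auto intro!: ext simp: pj_def M_zero cmp_def)

lemma pj_in_cmp: "graded P \<Longrightarrow> f \<in> P \<Longrightarrow> pj n f \<in> cmp P n"
  by (auto simp: graded_def cmp_def pj_def)

lemma cmp_sub: "submodule P R M \<Longrightarrow> submodule (cmp P n) R M"
proof -
  assume P: "submodule P R M"
  show ?thesis
  proof (rule submodI'[OF MM])
    show "cmp P n \<subseteq> carrier M" using Mmod.submoduleE(1)[OF P] by (auto simp: cmp_def)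
    show "\<zero>\<^bsub>M\<^esub> \<in> cmp P n"
      using subgroup.one_closed[OF submodule.axioms(1)[OF P]] by (auto simp: cmp_def M_zero)
  next
    fix a b assume "a \<in> cmp P n" "b \<in> cmp P n"
    then show "a \<oplus>\<^bsub>M\<^esub> b \<in> cmp P n" using Mmod.submoduleE(5)[OF P]
      by (auto simp: cmp_def M_add)
  next
    fix r a assume "r \<in> carrier R" "a \<in> cmp P n"
    then show "r \<odot>\<^bsub>M\<^esub> a \<in> cmp P n" using Mmod.submoduleE(4)[OF P]
      by (auto simp: cmp_def M_smult)
  qed
qed

lemma ops_car: "i < Suc k \<Longrightarrow> f \<in> carrier M \<Longrightarrow> ops i f \<in> carrier M"
proof -
  assume i: "i < Suc k" and f: "f \<in> carrier M"
  have "{n. ops i f n \<noteq> z} \<subseteq> (\<lambda>m. m + deg i) ` {n. f n \<noteq> z}"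
  proof
    fix n assume "n \<in> {n. ops i f n \<noteq> z}"
    then have "deg i \<le> n" "f (n - deg i) \<noteq> z" using Xe_zero by (auto simp: ops_eq split: if_splits)
    then show "n \<in> (\<lambda>m. m + deg i) ` {n. f n \<noteq> z}" by (intro image_eqI[of _ _ "n - deg i"]) auto
  qed
  moreover have "ops i f n \<in> Nf n" for n
    using Xe_Nf[OF i M_car_Nf[OF f, of "n - deg i"]] Nf_zero by (auto simp: ops_eq)
  ultimately show ?thesis using f unfolding M_car by (auto intro: finite_subset)
qed

lemma ops_add: "i < Suc k \<Longrightarrow> f \<in> carrier M \<Longrightarrow> g \<in> carrier M \<Longrightarrow> ops i (f \<oplus>\<^bsub>M\<^esub> g) = ops i f \<oplus>\<^bsub>M\<^esub> ops i g"
  by (auto intro!: ext simp: ops_eq M_add Xe_add M_car_N)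

lemma ops_smult: "i < Suc k \<Longrightarrow> r \<in> carrier R \<Longrightarrow> f \<in> carrier M \<Longrightarrow> ops i (r \<odot>\<^bsub>M\<^esub> f) = r \<odot>\<^bsub>M\<^esub> ops i f"
  by (auto intro!: ext simp: ops_eq M_smult Xe_smult M_car_N)

lemma ops_zero: "ops i \<zero>\<^bsub>M\<^esub> = \<zero>\<^bsub>M\<^esub>"
  by (auto intro!: ext simp: ops_eq M_zero Xe_zero)

lemma ops_neg: "i < Suc k \<Longrightarrow> f \<in> carrier M \<Longrightarrow> ops i (\<ominus>\<^bsub>M\<^esub> f) = \<ominus>\<^bsub>M\<^esub> ops i f"
proof -
  assume i: "i < Suc k" and f: "f \<in> carrier M"
  have "ops i (\<ominus>\<^bsub>M\<^esub> f) \<oplus>\<^bsub>M\<^esub> ops i f = \<zero>\<^bsub>M\<^esub>"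
    using ops_add[OF i, of "\<ominus>\<^bsub>M\<^esub> f" f] f ops_zero by (simp add: Mmod.l_neg)
  then show ?thesis using Mmod.minus_equality ops_car[OF i] f by (metis Mmod.add.inv_closed)
qed

lemma pj_ops: "pj m (ops i f) = (if deg i \<le> m then ops i (pj (m - deg i) f) else \<zero>\<^bsub>M\<^esub>)"
  by (auto intro!: ext simp: pj_def ops_eq M_zero Xe_zero)

lemma ops_comm: "i < Suc k \<Longrightarrow> j < Suc k \<Longrightarrow> f \<in> carrier M \<Longrightarrow> ops i (ops j f) = ops j (ops i f)"
  by (auto intro!: ext simp: ops_eq Xe_comm M_car_N Xe_zero add.commute diff_diff_add)


lemma pj_eq_zero: "pj m x = \<zero>\<^bsub>M\<^esub> \<longleftrightarrow> x m = z"
  by (auto simp: pj_def M_zero fun_eq_iff)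

lemma cmp_iff: "x \<in> cmp P n \<longleftrightarrow> x \<in> P \<and> (\<forall>m. m \<noteq> n \<longrightarrow> pj m x = \<zero>\<^bsub>M\<^esub>)"
  by (auto simp: cmp_def pj_eq_zero)

definition good :: "(nat \<Rightarrow> 'm) set \<Rightarrow> bool" where
  "good P \<longleftrightarrow> poly_submodule R M (Suc k) ops P \<and> graded P"

definition Kset where "Kset A B i = {a \<in> A. ops i a \<in> B}"
definition Iset where "Iset A B i = {ops i a \<oplus>\<^bsub>M\<^esub> b | a b. a \<in> A \<and> b \<in> B}"

lemma good_sub: "good P \<Longrightarrow> submodule P R M"
  by (simp add: good_def poly_submodule_def)
lemma good_car: "good P \<Longrightarrow> x \<in> P \<Longrightarrow> x \<in> carrier M"
  using Mmod.submoduleE(1)[OF good_sub] by auto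
lemma good_zero: "good P \<Longrightarrow> \<zero>\<^bsub>M\<^esub> \<in> P"
  using subgroup.one_closed[OF submodule.axioms(1)[OF good_sub]] by simp
lemma good_add: "good P \<Longrightarrow> x \<in> P \<Longrightarrow> y \<in> P \<Longrightarrow> x \<oplus>\<^bsub>M\<^esub> y \<in> P"
  using Mmod.submoduleE(5)[OF good_sub] by auto
lemma good_neg: "good P \<Longrightarrow> x \<in> P \<Longrightarrow> \<ominus>\<^bsub>M\<^esub> x \<in> P"
  using Mmod.submoduleE(3)[OF good_sub] by auto
lemma good_smult: "good P \<Longrightarrow> r \<in> carrier R \<Longrightarrow> x \<in> P \<Longrightarrow> r \<odot>\<^bsub>M\<^esub> x \<in> P"
  using Mmod.submoduleE(4)[OF good_sub] by auto
lemma good_ops: "good P \<Longrightarrow> i < Suc k \<Longrightarrow> x \<in> P \<Longrightarrow> ops i x \<in> P"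
  by (auto simp: good_def poly_submodule_def)
lemma good_pj: "good P \<Longrightarrow> x \<in> P \<Longrightarrow> pj n x \<in> P"
  by (auto simp: good_def graded_def)

lemma goodI:
  assumes "P \<subseteq> carrier M" "\<zero>\<^bsub>M\<^esub> \<in> P"
    "\<And>x y. x \<in> P \<Longrightarrow> y \<in> P \<Longrightarrow> x \<oplus>\<^bsub>M\<^esub> y \<in> P"
    "\<And>r x. r \<in> carrier R \<Longrightarrow> x \<in> P \<Longrightarrow> r \<odot>\<^bsub>M\<^esub> x \<in> P"
    "\<And>i x. i < Suc k \<Longrightarrow> x \<in> P \<Longrightarrow> ops i x \<in> P"
    "\<And>n x. x \<in> P \<Longrightarrow> pj n x \<in> P"
  shows "good P"
  unfolding good_def poly_submodule_def graded_def
  using submodI'[OF MM assms(1-4)] assms(5,6) by blast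

lemma good_carrier: "good (carrier M)"
  by (rule goodI) (auto simp: M_zero_car M_add_car M_smult_car ops_car pj_car)

lemma good_zero_set: "good {\<zero>\<^bsub>M\<^esub>}"
  by (rule goodI) (auto simp: M_zero_car pj_zero ops_zero)

lemma K_good:
  assumes A: "good A" and B: "good B" and BA: "B \<subseteq> A" and i: "i < Suc k"
  shows "good (Kset A B i)" "B \<subseteq> Kset A B i" "Kset A B i \<subseteq> A"
proof -
  show "good (Kset A B i)"
  proof (rule goodI)
    show "Kset A B i \<subseteq> carrier M" using good_car[OF A] by (auto simp: Kset_def)
    show "\<zero>\<^bsub>M\<^esub> \<in> Kset A B i" using good_zero[OF A] good_zero[OF B] by (auto simp: Kset_def ops_zero)
  next
    fix x y assume "x \<in> Kset A B i" "y \<in> Kset A B i"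
    then show "x \<oplus>\<^bsub>M\<^esub> y \<in> Kset A B i"
      using good_add[OF A] good_add[OF B] ops_add[OF i] good_car[OF A] by (auto simp: Kset_def)
  next
    fix r x assume "r \<in> carrier R" "x \<in> Kset A B i"
    then show "r \<odot>\<^bsub>M\<^esub> x \<in> Kset A B i"
      using good_smult[OF A] good_smult[OF B] ops_smult[OF i] good_car[OF A] by (auto simp: Kset_def)
  next
    fix j x assume j: "j < Suc k" and x: "x \<in> Kset A B i"
    then show "ops j x \<in> Kset A B i"
      using good_ops[OF A j] good_ops[OF B j] ops_comm[OF i j] good_car[OF A] by (auto simp: Kset_def)
  next
    fix n x assume x: "x \<in> Kset A B i"
    have "ops i (pj n x) = pj (n + deg i) (ops i x)" by (simp add: pj_ops)
    then show "pj n x \<in> Kset A B i"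
      using x good_pj[OF A] good_pj[OF B] by (auto simp: Kset_def)
  qed
  show "B \<subseteq> Kset A B i" using BA good_ops[OF B i] by (auto simp: Kset_def)
  show "Kset A B i \<subseteq> A" by (auto simp: Kset_def)
qed

lemma I_good:
  assumes A: "good A" and B: "good B" and BA: "B \<subseteq> A" and i: "i < Suc k"
  shows "good (Iset A B i)" "B \<subseteq> Iset A B i" "Iset A B i \<subseteq> A"
proof -
  have cA: "\<And>x. x \<in> A \<Longrightarrow> x \<in> carrier M" using good_car[OF A] .
  have cB: "\<And>x. x \<in> B \<Longrightarrow> x \<in> carrier M" using good_car[OF B] .
  have oA: "\<And>x. x \<in> A \<Longrightarrow> ops i x \<in> carrier M" using ops_car[OF i] cA by blast
  show "good (Iset A B i)"
  proof (rule goodI)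
    show "Iset A B i \<subseteq> carrier M" using oA cB by (auto simp: Iset_def)
    show "\<zero>\<^bsub>M\<^esub> \<in> Iset A B i" using good_zero[OF A] good_zero[OF B] ops_zero
      by (auto simp: Iset_def intro!: exI[of _ "\<zero>\<^bsub>M\<^esub>"])
  next
    fix x y assume "x \<in> Iset A B i" "y \<in> Iset A B i"
    then obtain a b a' b' where ab: "a \<in> A" "b \<in> B" "a' \<in> A" "b' \<in> B" and
      x: "x = ops i a \<oplus>\<^bsub>M\<^esub> b" and y: "y = ops i a' \<oplus>\<^bsub>M\<^esub> b'" by (auto simp: Iset_def)
    have "x \<oplus>\<^bsub>M\<^esub> y = ops i (a \<oplus>\<^bsub>M\<^esub> a') \<oplus>\<^bsub>M\<^esub> (b \<oplus>\<^bsub>M\<^esub> b')"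
      using ab oA cA cB by (simp add: x y ops_add[OF i] Mmod.a_ac)
    then show "x \<oplus>\<^bsub>M\<^esub> y \<in> Iset A B i"
      using ab good_add[OF A] good_add[OF B] unfolding Iset_def by blast
  next
    fix r x assume r: "r \<in> carrier R" and "x \<in> Iset A B i"
    then obtain a b where ab: "a \<in> A" "b \<in> B" and x: "x = ops i a \<oplus>\<^bsub>M\<^esub> b" by (auto simp: Iset_def)
    have "r \<odot>\<^bsub>M\<^esub> x = ops i (r \<odot>\<^bsub>M\<^esub> a) \<oplus>\<^bsub>M\<^esub> (r \<odot>\<^bsub>M\<^esub> b)"
      using ab oA cA cB r by (simp add: x ops_smult[OF i] Mmod.smult_r_distr)
    then show "r \<odot>\<^bsub>M\<^esub> x \<in> Iset A B i"
      using ab r good_smult[OF A] good_smult[OF B] unfolding Iset_def by blast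
  next
    fix j x assume j: "j < Suc k" and "x \<in> Iset A B i"
    then obtain a b where ab: "a \<in> A" "b \<in> B" and x: "x = ops i a \<oplus>\<^bsub>M\<^esub> b" by (auto simp: Iset_def)
    have "ops j x = ops i (ops j a) \<oplus>\<^bsub>M\<^esub> ops j b"
      using ab oA cA cB by (simp add: x ops_add[OF j] ops_comm[OF i j])
    then show "ops j x \<in> Iset A B i"
      using ab good_ops[OF A j] good_ops[OF B j] unfolding Iset_def by blast
  next
    fix n x assume "x \<in> Iset A B i"
    then obtain a b where ab: "a \<in> A" "b \<in> B" and x: "x = ops i a \<oplus>\<^bsub>M\<^esub> b" by (auto simp: Iset_def)
    define a' where "a' = (if deg i \<le> n then pj (n - deg i) a else \<zero>\<^bsub>M\<^esub>)"
    have a': "a' \<in> A" using good_pj[OF A ab(1)] good_zero[OF A] by (auto simp: a'_def)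
    have "pj n x = ops i a' \<oplus>\<^bsub>M\<^esub> pj n b"
      using ab oA cA cB by (simp add: x pj_add pj_ops a'_def ops_zero)
    then show "pj n x \<in> Iset A B i"
      using a' good_pj[OF B ab(2)] unfolding Iset_def by blast
  qed
  show "B \<subseteq> Iset A B i"
  proof
    fix b assume b: "b \<in> B"
    then have "b = ops i \<zero>\<^bsub>M\<^esub> \<oplus>\<^bsub>M\<^esub> b" using cB by (simp add: ops_zero)
    then show "b \<in> Iset A B i" using b good_zero[OF A] unfolding Iset_def by blast
  qed
  show "Iset A B i \<subseteq> A" using good_ops[OF A i] good_add[OF A] BA by (auto simp: Iset_def)
qed


lemma exact_M:
  fixes lam :: "('r, nat \<Rightarrow> 'm) module \<Rightarrow> ennreal"
  assumes lam: "length_function R lam"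
    and P: "submodule P R M" and Q: "submodule Q R M" and S: "submodule S R M"
    and f1: "\<And>x. x \<in> P \<Longrightarrow> f x \<in> Q"
    and f2: "\<And>x y. x \<in> P \<Longrightarrow> y \<in> P \<Longrightarrow> f (x \<oplus>\<^bsub>M\<^esub> y) = f x \<oplus>\<^bsub>M\<^esub> f y"
    and f3: "\<And>r x. r \<in> carrier R \<Longrightarrow> x \<in> P \<Longrightarrow> f (r \<odot>\<^bsub>M\<^esub> x) = r \<odot>\<^bsub>M\<^esub> f x"
    and g1: "\<And>x. x \<in> Q \<Longrightarrow> g x \<in> S"
    and g2: "\<And>x y. x \<in> Q \<Longrightarrow> y \<in> Q \<Longrightarrow> g (x \<oplus>\<^bsub>M\<^esub> y) = g x \<oplus>\<^bsub>M\<^esub> g y"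
    and g3: "\<And>r x. r \<in> carrier R \<Longrightarrow> x \<in> Q \<Longrightarrow> g (r \<odot>\<^bsub>M\<^esub> x) = r \<odot>\<^bsub>M\<^esub> g x"
    and inj: "inj_on f P" and surj: "g ` Q = S" and ker: "f ` P = {x \<in> Q. g x = \<zero>\<^bsub>M\<^esub>}"
  shows "lam (submod M Q) = lam (submod M P) + lam (submod M S)"
proof -
  have ax: "\<And>A B C f g. Module.module R A \<Longrightarrow> Module.module R B \<Longrightarrow> Module.module R C \<Longrightarrow>
        mod_hom R A B f \<Longrightarrow> mod_hom R B C g \<Longrightarrow> inj_on f (carrier A) \<Longrightarrow>
        g ` carrier B = carrier C \<Longrightarrow>
        f ` carrier A = {x \<in> carrier B. g x = \<zero>\<^bsub>C\<^esub>} \<Longrightarrow> lam B = lam A + lam C"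
    using lam unfolding length_function_def by blast
  show ?thesis
    apply (rule ax[of "submod M P" "submod M Q" "submod M S" f g])
    using submodule.submodule_is_module[OF P MM] submodule.submodule_is_module[OF Q MM]
      submodule.submodule_is_module[OF S MM] f1 f2 f3 g1 g2 g3 inj surj ker
    by (auto simp: mod_hom_def)
qed

lemma D_sub:
  assumes A: "good A" and B: "good B"
  shows "submodule {x \<in> carrier M. pj n x \<in> A \<and> pj n' x \<in> B \<and> (\<forall>m. m \<noteq> n \<and> m \<noteq> n' \<longrightarrow> pj m x = \<zero>\<^bsub>M\<^esub>)} R M"
  by (rule submodI'[OF MM])
    (auto simp: M_zero_car pj_zero good_zero[OF A] good_zero[OF B] M_add_car M_smult_car pj_add pj_smult
      good_add[OF A] good_add[OF B] good_smult[OF A] good_smult[OF B])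

lemma decomp:
  assumes x: "x \<in> carrier M" and nn: "n \<noteq> n'" and o: "\<forall>m. m \<noteq> n \<and> m \<noteq> n' \<longrightarrow> pj m x = \<zero>\<^bsub>M\<^esub>"
  shows "x = pj n x \<oplus>\<^bsub>M\<^esub> pj n' x"
proof (rule ext)
  fix m
  show "x m = (pj n x \<oplus>\<^bsub>M\<^esub> pj n' x) m"
    using o[rule_format, of m] nn M_car_N[OF x] unfolding pj_eq_zero
    by (auto simp: M_add pj_def)
qed

lemma opsc: "a \<in> cmp P n \<Longrightarrow> pj m (ops i a) = (if m = n + deg i then ops i a else \<zero>\<^bsub>M\<^esub>)"
  by (cases "deg i \<le> m") (auto simp: pj_ops cmp_pj ops_zero)

lemma pj_cmp_car: "x \<in> carrier M \<Longrightarrow> pj n x \<in> cmp (carrier M) n"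
  using pj_in_cmp good_carrier by (auto simp: good_def)

lemma main_eq:
  fixes lam :: "('r, nat \<Rightarrow> 'm) module \<Rightarrow> ennreal"
  assumes lam: "length_function R lam"
    and A: "good A" and B: "good B" and BA: "B \<subseteq> A" and i: "i < Suc k" and dpos: "0 < deg i"
  shows "lam (submod M (cmp A n)) + lam (submod M (cmp B (n + deg i)))
       = lam (submod M (cmp (Kset A B i) n)) + lam (submod M (cmp (Iset A B i) (n + deg i)))"
proof -
  define d where "d = deg i"
  have d: "0 < d" using dpos d_def by simp
  have nd: "n \<noteq> n + d" using d by simp
  define D where "D = {x \<in> carrier M. pj n x \<in> A \<and> pj (n + d) x \<in> B \<and> (\<forall>m. m \<noteq> n \<and> m \<noteq> n + d \<longrightarrow> pj m x = \<zero>\<^bsub>M\<^esub>)}"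
  have Ds: "submodule D R M" unfolding D_def by (rule D_sub[OF A B])
  have cA: "\<And>x. x \<in> A \<Longrightarrow> x \<in> carrier M" using good_car[OF A] .
  have cB: "\<And>x. x \<in> B \<Longrightarrow> x \<in> carrier M" using good_car[OF B] .
  have cD: "\<And>x. x \<in> D \<Longrightarrow> x \<in> carrier M" by (auto simp: D_def)
  have Dd: "\<And>x. x \<in> D \<Longrightarrow> x = pj n x \<oplus>\<^bsub>M\<^esub> pj (n + d) x"
    using decomp nd by (auto simp: D_def)
  note KG = K_good[OF A B BA i] and IG = I_good[OF A B BA i]
  have seq1: "lam (submod M D) = lam (submod M (cmp A n)) + lam (submod M (cmp B (n + d)))"
  proof (rule exact_M[OF lam cmp_sub[OF good_sub[OF A]] Ds cmp_sub[OF good_sub[OF B]], where f = id and g = "pj (n + d)"])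
    fix x assume x: "x \<in> cmp A n"
    then show "id x \<in> D" using nd good_zero[OF B] good_pj[OF A] unfolding D_def by (auto simp: cmp_pj cmp_iff cA)
  next
    fix x assume x: "x \<in> D"
    then show "pj (n + d) x \<in> cmp B (n + d)" by (auto simp: D_def cmp_iff pj_pj)
  next
    fix x y assume "x \<in> D" "y \<in> D" then show "pj (n + d) (x \<oplus>\<^bsub>M\<^esub> y) = pj (n + d) x \<oplus>\<^bsub>M\<^esub> pj (n + d) y"
      using cD pj_add by blast
  next
    fix r x assume "r \<in> carrier R" "x \<in> D" then show "pj (n + d) (r \<odot>\<^bsub>M\<^esub> x) = r \<odot>\<^bsub>M\<^esub> pj (n + d) x"
      using pj_smult by blast
  next
    show "pj (n + d) ` D = cmp B (n + d)"
    proof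
      show "pj (n + d) ` D \<subseteq> cmp B (n + d)" by (auto simp: D_def cmp_iff pj_pj)
      show "cmp B (n + d) \<subseteq> pj (n + d) ` D"
      proof
        fix b assume b: "b \<in> cmp B (n + d)"
        have "b \<in> D" using b nd good_zero[OF A] good_pj[OF B] unfolding D_def by (auto simp: cmp_pj cmp_iff cB)
        moreover have "pj (n + d) b = b" using b by (simp add: cmp_pj)
        ultimately show "b \<in> pj (n + d) ` D" by force
      qed
    qed
  next
    show "id ` cmp A n = {x \<in> D. pj (n + d) x = \<zero>\<^bsub>M\<^esub>}"
    proof
      show "id ` cmp A n \<subseteq> {x \<in> D. pj (n + d) x = \<zero>\<^bsub>M\<^esub>}"
        using nd good_zero[OF B] good_pj[OF A] unfolding D_def by (auto simp: cmp_pj cmp_iff cA)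
      show "{x \<in> D. pj (n + d) x = \<zero>\<^bsub>M\<^esub>} \<subseteq> id ` cmp A n"
      proof
        fix x assume x: "x \<in> {x \<in> D. pj (n + d) x = \<zero>\<^bsub>M\<^esub>}"
        have x1: "x \<in> D" "pj (n + d) x = \<zero>\<^bsub>M\<^esub>" using x by auto
        have "x = pj n x \<oplus>\<^bsub>M\<^esub> pj (n + d) x" using Dd x1(1) by blast
        also have "\<dots> = pj n x" using x1 pj_car cD by simp
        finally have xe: "x = pj n x" .
        have "pj n x \<in> A" using x1(1) by (simp add: D_def)
        then have "x \<in> A" using xe by metis
        moreover have "pj m x = \<zero>\<^bsub>M\<^esub>" if "m \<noteq> n" for m using pj_pj[of m n x] xe that by metis
        ultimately have "x \<in> cmp A n" unfolding cmp_iff by blast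
        then show "x \<in> id ` cmp A n" by simp
      qed
    qed
  qed simp_all
  have seq2: "lam (submod M D) = lam (submod M (cmp (Kset A B i) n)) + lam (submod M (cmp (Iset A B i) (n + d)))"
  proof (rule exact_M[OF lam cmp_sub[OF good_sub[OF KG(1)]] Ds cmp_sub[OF good_sub[OF IG(1)]],
        where f = "\<lambda>a. a \<oplus>\<^bsub>M\<^esub> \<ominus>\<^bsub>M\<^esub> ops i a" and g = "\<lambda>x. ops i (pj n x) \<oplus>\<^bsub>M\<^esub> pj (n + d) x"])
    have cK: "\<And>a. a \<in> cmp (Kset A B i) n \<Longrightarrow> a \<in> carrier M \<and> a \<in> A \<and> ops i a \<in> B"
      using cA by (auto simp: cmp_def Kset_def)
    have cK2: "\<And>a. a \<in> cmp (Kset A B i) n \<Longrightarrow> ops i a \<in> carrier M"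
      using cK ops_car[OF i] by blast
    have pjphi: "pj m (a \<oplus>\<^bsub>M\<^esub> \<ominus>\<^bsub>M\<^esub> ops i a) = (if m = n then a else if m = n + d then \<ominus>\<^bsub>M\<^esub> ops i a else \<zero>\<^bsub>M\<^esub>)"
      if a: "a \<in> cmp (Kset A B i) n" for a m
      using cK[OF a] cK2[OF a] opsc[OF a, of m] cmp_pj[OF a, of m] nd
      by (auto simp: pj_add pj_neg d_def)
    have phiD: "a \<oplus>\<^bsub>M\<^esub> \<ominus>\<^bsub>M\<^esub> ops i a \<in> D" if a: "a \<in> cmp (Kset A B i) n" for a
      using pjphi[OF a] cK[OF a] cK2[OF a] good_neg[OF B] good_zero[OF A] good_zero[OF B] nd
      unfolding D_def by auto
    show "a \<oplus>\<^bsub>M\<^esub> \<ominus>\<^bsub>M\<^esub> ops i a \<in> D" if "a \<in> cmp (Kset A B i) n" for a using phiD that .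
    show "a \<oplus>\<^bsub>M\<^esub> b \<oplus>\<^bsub>M\<^esub> \<ominus>\<^bsub>M\<^esub> ops i (a \<oplus>\<^bsub>M\<^esub> b) =
        (a \<oplus>\<^bsub>M\<^esub> \<ominus>\<^bsub>M\<^esub> ops i a) \<oplus>\<^bsub>M\<^esub> (b \<oplus>\<^bsub>M\<^esub> \<ominus>\<^bsub>M\<^esub> ops i b)"
      if "a \<in> cmp (Kset A B i) n" "b \<in> cmp (Kset A B i) n" for a b
      using cK[OF that(1)] cK[OF that(2)] cK2[OF that(1)] cK2[OF that(2)]
      by (simp add: ops_add[OF i] Mmod.minus_add Mmod.a_ac)
    show "r \<odot>\<^bsub>M\<^esub> a \<oplus>\<^bsub>M\<^esub> \<ominus>\<^bsub>M\<^esub> ops i (r \<odot>\<^bsub>M\<^esub> a) = r \<odot>\<^bsub>M\<^esub> (a \<oplus>\<^bsub>M\<^esub> \<ominus>\<^bsub>M\<^esub> ops i a)"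
      if "r \<in> carrier R" "a \<in> cmp (Kset A B i) n" for r a
      using cK[OF that(2)] cK2[OF that(2)] that(1)
      by (simp add: ops_smult[OF i] Mmod.smult_r_distr Mmod.smult_r_minus)
    have psiI: "ops i (pj n x) \<oplus>\<^bsub>M\<^esub> pj (n + d) x \<in> cmp (Iset A B i) (n + d)" if x: "x \<in> D" for x
    proof -
      have xc: "x \<in> carrier M" using cD x .
      have "ops i (pj n x) \<oplus>\<^bsub>M\<^esub> pj (n + d) x \<in> Iset A B i"
        using x unfolding D_def Iset_def by blast
      moreover have "pj m (ops i (pj n x) \<oplus>\<^bsub>M\<^esub> pj (n + d) x) = \<zero>\<^bsub>M\<^esub>" if m: "m \<noteq> n + d" for m
        using opsc[OF pj_cmp_car[OF xc], of m i] m xc pj_car[OF xc] ops_car[OF i pj_car[OF xc]]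
        by (simp add: pj_add pj_pj d_def)
      ultimately show ?thesis unfolding cmp_iff by blast
    qed
    show "ops i (pj n x) \<oplus>\<^bsub>M\<^esub> pj (n + d) x \<in> cmp (Iset A B i) (n + d)" if "x \<in> D" for x
      using psiI that .
    show "ops i (pj n (x \<oplus>\<^bsub>M\<^esub> y)) \<oplus>\<^bsub>M\<^esub> pj (n + d) (x \<oplus>\<^bsub>M\<^esub> y) =
        (ops i (pj n x) \<oplus>\<^bsub>M\<^esub> pj (n + d) x) \<oplus>\<^bsub>M\<^esub> (ops i (pj n y) \<oplus>\<^bsub>M\<^esub> pj (n + d) y)"
      if "x \<in> D" "y \<in> D" for x y
      using cD[OF that(1)] cD[OF that(2)] pj_car[OF cD[OF that(1)]] pj_car[OF cD[OF that(2)]]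
        ops_car[OF i pj_car[OF cD[OF that(1)]]] ops_car[OF i pj_car[OF cD[OF that(2)]]]
        pj_car[OF cD[OF that(1)], of "n+d"] pj_car[OF cD[OF that(2)], of "n+d"]
      by (simp add: pj_add ops_add[OF i] Mmod.a_ac)
    show "ops i (pj n (r \<odot>\<^bsub>M\<^esub> x)) \<oplus>\<^bsub>M\<^esub> pj (n + d) (r \<odot>\<^bsub>M\<^esub> x) =
        r \<odot>\<^bsub>M\<^esub> (ops i (pj n x) \<oplus>\<^bsub>M\<^esub> pj (n + d) x)"
      if "r \<in> carrier R" "x \<in> D" for r x
      using cD[OF that(2)] pj_car[OF cD[OF that(2)]] ops_car[OF i pj_car[OF cD[OF that(2)]]]
        pj_car[OF cD[OF that(2)], of "n+d"] that(1)
      by (simp add: pj_smult ops_smult[OF i] Mmod.smult_r_distr pj_car)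
    show "inj_on (\<lambda>a. a \<oplus>\<^bsub>M\<^esub> \<ominus>\<^bsub>M\<^esub> ops i a) (cmp (Kset A B i) n)"
    proof (rule inj_onI)
      fix a b assume a: "a \<in> cmp (Kset A B i) n" and b: "b \<in> cmp (Kset A B i) n"
        and e: "a \<oplus>\<^bsub>M\<^esub> \<ominus>\<^bsub>M\<^esub> ops i a = b \<oplus>\<^bsub>M\<^esub> \<ominus>\<^bsub>M\<^esub> ops i b"
      have "pj n (a \<oplus>\<^bsub>M\<^esub> \<ominus>\<^bsub>M\<^esub> ops i a) = pj n (b \<oplus>\<^bsub>M\<^esub> \<ominus>\<^bsub>M\<^esub> ops i b)" using e by simp
      then show "a = b" using pjphi[OF a, of n] pjphi[OF b, of n] by simp
    qed
    show "(\<lambda>x. ops i (pj n x) \<oplus>\<^bsub>M\<^esub> pj (n + d) x) ` D = cmp (Iset A B i) (n + d)"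
    proof
      show "(\<lambda>x. ops i (pj n x) \<oplus>\<^bsub>M\<^esub> pj (n + d) x) ` D \<subseteq> cmp (Iset A B i) (n + d)"
        using psiI by blast
      show "cmp (Iset A B i) (n + d) \<subseteq> (\<lambda>x. ops i (pj n x) \<oplus>\<^bsub>M\<^esub> pj (n + d) x) ` D"
      proof
        fix y assume y: "y \<in> cmp (Iset A B i) (n + d)"
        then obtain a b where ab: "a \<in> A" "b \<in> B" and ye: "y = ops i a \<oplus>\<^bsub>M\<^esub> b"
          by (auto simp: cmp_def Iset_def)
        have ca: "a \<in> carrier M" "b \<in> carrier M" using ab cA cB by auto
        have "y = pj (n + d) y" using cmp_pj[OF y, of "n+d"] by simp
        also have "\<dots> = ops i (pj n a) \<oplus>\<^bsub>M\<^esub> pj (n + d) b"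
          using ca ops_car[OF i ca(1)] by (simp add: ye pj_add pj_ops d_def)
        finally have y2: "y = ops i (pj n a) \<oplus>\<^bsub>M\<^esub> pj (n + d) b" .
        define x where "x = pj n a \<oplus>\<^bsub>M\<^esub> pj (n + d) b"
        have pjx: "pj m x = (if m = n then pj n a else if m = n + d then pj (n + d) b else \<zero>\<^bsub>M\<^esub>)" for m
          using ca pj_car nd by (simp add: x_def pj_add pj_pj)
        have xc: "x \<in> carrier M" using ca pj_car M_add_car x_def by simp
        have xD: "x \<in> D" using pjx xc good_pj[OF A ab(1)] good_pj[OF B ab(2)] nd unfolding D_def by auto
        have "ops i (pj n x) \<oplus>\<^bsub>M\<^esub> pj (n + d) x = y" using pjx[of n] pjx[of "n+d"] nd y2 by simp
        then show "y \<in> (\<lambda>x. ops i (pj n x) \<oplus>\<^bsub>M\<^esub> pj (n + d) x) ` D" using xD by force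
      qed
    qed
    show "(\<lambda>a. a \<oplus>\<^bsub>M\<^esub> \<ominus>\<^bsub>M\<^esub> ops i a) ` cmp (Kset A B i) n = {x \<in> D. ops i (pj n x) \<oplus>\<^bsub>M\<^esub> pj (n + d) x = \<zero>\<^bsub>M\<^esub>}"
    proof
      show "(\<lambda>a. a \<oplus>\<^bsub>M\<^esub> \<ominus>\<^bsub>M\<^esub> ops i a) ` cmp (Kset A B i) n \<subseteq> {x \<in> D. ops i (pj n x) \<oplus>\<^bsub>M\<^esub> pj (n + d) x = \<zero>\<^bsub>M\<^esub>}"
      proof
        fix x assume "x \<in> (\<lambda>a. a \<oplus>\<^bsub>M\<^esub> \<ominus>\<^bsub>M\<^esub> ops i a) ` cmp (Kset A B i) n"
        then obtain a where a: "a \<in> cmp (Kset A B i) n" and xe: "x = a \<oplus>\<^bsub>M\<^esub> \<ominus>\<^bsub>M\<^esub> ops i a" by auto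
        have "ops i (pj n x) \<oplus>\<^bsub>M\<^esub> pj (n + d) x = \<zero>\<^bsub>M\<^esub>"
          using pjphi[OF a, of n] pjphi[OF a, of "n+d"] nd cK2[OF a] by (simp add: xe Mmod.r_neg)
        then show "x \<in> {x \<in> D. ops i (pj n x) \<oplus>\<^bsub>M\<^esub> pj (n + d) x = \<zero>\<^bsub>M\<^esub>}" using phiD[OF a] xe by simp
      qed
      show "{x \<in> D. ops i (pj n x) \<oplus>\<^bsub>M\<^esub> pj (n + d) x = \<zero>\<^bsub>M\<^esub>} \<subseteq> (\<lambda>a. a \<oplus>\<^bsub>M\<^esub> \<ominus>\<^bsub>M\<^esub> ops i a) ` cmp (Kset A B i) n"
      proof
        fix x assume "x \<in> {x \<in> D. ops i (pj n x) \<oplus>\<^bsub>M\<^esub> pj (n + d) x = \<zero>\<^bsub>M\<^esub>}"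
        then have x: "x \<in> D" and e: "ops i (pj n x) \<oplus>\<^bsub>M\<^esub> pj (n + d) x = \<zero>\<^bsub>M\<^esub>" by auto
        define a where "a = pj n x"
        have xc: "x \<in> carrier M" using cD x .
        have ac: "a \<in> carrier M" "ops i a \<in> carrier M" "pj (n + d) x \<in> carrier M"
          using pj_car[OF xc] ops_car[OF i] a_def by auto
        have c: "\<ominus>\<^bsub>M\<^esub> pj (n + d) x = ops i a" using Mmod.minus_equality[OF _ ac(3) ac(2)] e a_def by simp
        have c2: "pj (n + d) x = \<ominus>\<^bsub>M\<^esub> ops i a" using c ac by (metis Mmod.minus_minus)
        have aA: "a \<in> A" using x a_def D_def by simp
        have "pj (n + d) x \<in> B" using x D_def by simp
        then have "\<ominus>\<^bsub>M\<^esub> pj (n + d) x \<in> B" by (rule good_neg[OF B])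
        then have "ops i a \<in> B" using c by simp
        then have aK: "a \<in> cmp (Kset A B i) n" using aA a_def pj_pj unfolding cmp_iff Kset_def by auto
        have "x = a \<oplus>\<^bsub>M\<^esub> \<ominus>\<^bsub>M\<^esub> ops i a" using Dd[OF x] c2 a_def by simp
        then show "x \<in> (\<lambda>a. a \<oplus>\<^bsub>M\<^esub> \<ominus>\<^bsub>M\<^esub> ops i a) ` cmp (Kset A B i) n" using aK by blast
      qed
    qed
  qed
  show ?thesis using seq1 seq2 d_def by simp
qed


lemma part1:
  fixes lam1 :: "('r, 'm) module \<Rightarrow> ennreal" and lam2 :: "('r, nat \<Rightarrow> 'm) module \<Rightarrow> ennreal"
  assumes compat: "length_compatible R lam1 lam2"
  shows "lam1 (submod N (Nf n)) = lam2 (submod M (rees_component N Nf n))"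
proof -
  have rc: "rees_component N Nf n = cmp (carrier M) n" by (simp add: rees_component_def cmp_def)
  define f where "f = (\<lambda>v::'m. \<lambda>m::nat. if m = n then v else z)"
  have fc: "f v \<in> cmp (carrier M) n" if v: "v \<in> Nf n" for v
  proof -
    have "{m. f v m \<noteq> z} \<subseteq> {n}" by (auto simp: f_def)
    then show ?thesis using v Nf_zero unfolding cmp_def M_car f_def by (auto intro: finite_subset)
  qed
  have hom: "mod_hom R (submod N (Nf n)) (submod M (cmp (carrier M) n)) f"
    unfolding mod_hom_def using fc Nf_car
    by (auto simp: M_add M_smult f_def fun_eq_iff)
  have bij: "bij_betw f (Nf n) (cmp (carrier M) n)"
  proof (rule bij_betw_imageI)
    show "inj_on f (Nf n)" by (rule inj_onI) (metis f_def)
    show "f ` Nf n = cmp (carrier M) n"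
    proof
      show "f ` Nf n \<subseteq> cmp (carrier M) n" using fc by auto
      show "cmp (carrier M) n \<subseteq> f ` Nf n"
      proof
        fix g assume g: "g \<in> cmp (carrier M) n"
        then have "g = f (g n)" by (auto simp: cmp_def f_def fun_eq_iff)
        moreover have "g n \<in> Nf n" using g M_car_Nf by (auto simp: cmp_def)
        ultimately show "g \<in> f ` Nf n" by blast
      qed
    qed
  qed
  have m1: "Module.module R (submod N (Nf n))" using submodule.submodule_is_module[OF Nf_sub NM] .
  have m2: "Module.module R (submod M (cmp (carrier M) n))"
    using submodule.submodule_is_module[OF cmp_sub[OF Mmod.carrier_is_submodule] MM] .
  have "mod_iso R (submod N (Nf n)) (submod M (cmp (carrier M) n))"
    unfolding mod_iso_def using hom bij by auto
  then show ?thesis using compat m1 m2 rc unfolding length_compatible_def by auto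
qed

end

lemma fps_fin:
  fixes c :: "nat \<Rightarrow> real"
  assumes "\<And>i. i > D \<Longrightarrow> c i = 0"
  shows "\<exists>p. Abs_fps c = fps_of_poly p"
  using coeff_Abs_poly[of D c] assms by (auto simp: fps_of_poly_def intro!: exI[of _ "Abs_poly c"])

lemma fps_step:
  fixes h h1 h2 :: "nat \<Rightarrow> real"
  assumes d: "0 < d" and rec: "\<And>n. h (n + d) - h n = h1 (n + d) - h2 n"
  shows "\<exists>q. Abs_fps h * (1 - fps_X ^ d) = Abs_fps h1 - fps_X ^ d * Abs_fps h2 + fps_of_poly q"
proof -
  define c where "c n = (if n < d then h n - h1 n else 0)" for n
  obtain q where q: "Abs_fps c = fps_of_poly q" using fps_fin[of d c] by (auto simp: c_def)
  have "Abs_fps h * (1 - fps_X ^ d) = Abs_fps h1 - fps_X ^ d * Abs_fps h2 + Abs_fps c"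
  proof (rule fps_ext)
    fix n
    show "fps_nth (Abs_fps h * (1 - fps_X ^ d)) n = fps_nth (Abs_fps h1 - fps_X ^ d * Abs_fps h2 + Abs_fps c) n"
    proof (cases "n < d")
      case True then show ?thesis
        by (simp add: right_diff_distrib fps_X_power_mult_right_nth fps_X_power_mult_nth c_def)
    next
      case False
      then obtain m where m: "n = m + d" by (metis add.commute le_Suc_ex not_less)
      show ?thesis using rec[of m] False
        by (simp add: right_diff_distrib fps_X_power_mult_right_nth fps_X_power_mult_nth c_def m)
    qed
  qed
  then show ?thesis using q by auto
qed

lemma enn2real_add:
  fixes a b :: ennreal
  assumes "a < \<infinity>" "b < \<infinity>"
  shows "enn2real (a + b) = enn2real a + enn2real b"
  using assms by (cases a rule: ennreal_cases; cases b rule: ennreal_cases)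
    (auto simp flip: ennreal_plus)


locale hs2 = hs R N k X \<gamma> Nf for R :: "'r ring" and N :: "('r, 'm) module" and k X \<gamma> Nf +
  fixes lam :: "('r, nat \<Rightarrow> 'm) module \<Rightarrow> ennreal"
  assumes lam: "length_function R lam"
    and fin: "\<And>n. lam (submod M (cmp (carrier M) n)) < \<infinity>"
    and gpos: "\<And>i. i < k \<Longrightarrow> 0 < \<gamma> i"
    and noeth: "noetherian_poly_module R M (Suc k) ops"
begin

definition hh where
  "hh A B n = enn2real (lam (submod M (cmp A n))) - enn2real (lam (submod M (cmp B n)))"

definition PiV :: "nat set \<Rightarrow> real fps" where
  "PiV V = (\<Prod>j\<in>V. 1 - fps_X ^ deg j)"

lemma deg_pos: "0 < deg i" using gpos by (simp add: deg_def)

lemma fin_good: "good P \<Longrightarrow> lam (submod M (cmp P n)) < \<infinity>"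
proof -
  assume P: "good P"
  have "lam (submod M (cmp P n)) \<le> lam (submod M (cmp (carrier M) n))"
    using good_car[OF P]
    by (intro lam_mono[OF lam MM cmp_sub[OF good_sub[OF P]] cmp_sub[OF Mmod.carrier_is_submodule]])
      (auto simp: cmp_def)
  then show ?thesis using fin[of n] by (meson le_less_trans)
qed

lemma PiV_poly: "\<exists>P. PiV V = fps_of_poly P"
  by (rule exI[of _ "\<Prod>j\<in>V. 1 - monom 1 (deg j)"])
    (simp add: PiV_def fps_of_poly_prod fps_of_poly_diff fps_of_poly_monom')

lemma base_case:
  assumes A: "good A" and B: "good B" and BA: "B \<subseteq> A"
    and triv: "\<And>j. j < Suc k \<Longrightarrow> ops j ` A \<subseteq> B"
  shows "\<exists>D. \<forall>n>D. hh A B n = 0"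
proof -
  have pA: "poly_submodule R M (Suc k) ops A" using A by (simp add: good_def)
  obtain G where G: "finite G" "G \<subseteq> A" and AG: "A = poly_span R M (Suc k) ops G"
    using noeth pA unfolding noetherian_poly_module_def by blast
  have "finite (\<Union>g\<in>G. {n. g n \<noteq> z})"
    using G good_car[OF A] M_car by auto
  then obtain D where D0: "\<forall>n \<in> (\<Union>g\<in>G. {n. g n \<noteq> z}). n \<le> D"
    using finite_nat_set_iff_bounded_le by meson
  have D: "\<And>g n. g \<in> G \<Longrightarrow> g n \<noteq> z \<Longrightarrow> n \<le> D" using D0 by blast
  define Q where "Q = {a \<in> A. \<forall>n>D. pj n a \<in> B}"
  have cA: "\<And>x. x \<in> A \<Longrightarrow> x \<in> carrier M" using good_car[OF A] .
  have Qs: "poly_submodule R M (Suc k) ops Q"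
    unfolding poly_submodule_def
  proof
    show "submodule Q R M"
    proof (rule submodI'[OF MM])
      show "Q \<subseteq> carrier M" using cA by (auto simp: Q_def)
      show "\<zero>\<^bsub>M\<^esub> \<in> Q" using good_zero[OF A] good_zero[OF B] by (auto simp: Q_def pj_zero)
    next
      fix a b assume "a \<in> Q" "b \<in> Q"
      then show "a \<oplus>\<^bsub>M\<^esub> b \<in> Q" using good_add[OF A] good_add[OF B] cA by (auto simp: Q_def pj_add)
    next
      fix r a assume "r \<in> carrier R" "a \<in> Q"
      then show "r \<odot>\<^bsub>M\<^esub> a \<in> Q" using good_smult[OF A] good_smult[OF B] by (auto simp: Q_def pj_smult)
    qed
    show "\<forall>i<Suc k. ops i ` Q \<subseteq> Q"
    proof (intro allI impI subsetI)
      fix i x assume i: "i < Suc k" and x: "x \<in> ops i ` Q"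
      then obtain a where a: "a \<in> Q" "x = ops i a" by blast
      have aA: "a \<in> A" using a(1) by (simp add: Q_def)
      have xB: "x \<in> B" using triv[OF i] aA a(2) by blast
      show "x \<in> Q" using xB BA good_pj[OF B xB] by (auto simp: Q_def)
    qed
  qed
  have "G \<subseteq> Q"
  proof
    fix g assume g: "g \<in> G"
    have "pj n g \<in> B" if "n > D" for n
    proof -
      have "g n = z" using D[OF g, of n] that by fastforce
      then have "pj n g = \<zero>\<^bsub>M\<^esub>" by (simp add: pj_eq_zero)
      then show ?thesis using good_zero[OF B] by simp
    qed
    then show "g \<in> Q" using g G by (auto simp: Q_def)
  qed
  then have AQ: "A \<subseteq> Q" using Qs AG unfolding poly_span_def by auto
  have "hh A B n = 0" if n: "n > D" for n
  proof -
    have "cmp A n = cmp B n"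
    proof
      show "cmp A n \<subseteq> cmp B n"
      proof
        fix a assume a: "a \<in> cmp A n"
        then have "pj n a \<in> B" using AQ n by (auto simp: cmp_def Q_def)
        then show "a \<in> cmp B n" using a cmp_pj[OF a, of n] by (auto simp: cmp_def)
      qed
      show "cmp B n \<subseteq> cmp A n" using BA by (auto simp: cmp_def)
    qed
    then show ?thesis by (simp add: hh_def)
  qed
  then show ?thesis by blast
qed

lemma induct_main:
  assumes "finite V"
  shows "V \<subseteq> {..<Suc k} \<Longrightarrow> good A \<Longrightarrow> good B \<Longrightarrow> B \<subseteq> A \<Longrightarrow>
    (\<And>j. j < Suc k \<Longrightarrow> j \<notin> V \<Longrightarrow> ops j ` A \<subseteq> B) \<Longrightarrow>
    \<exists>p. Abs_fps (hh A B) * PiV V = fps_of_poly p"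
  using assms
proof (induction V arbitrary: A B rule: finite_induct)
  case empty
  obtain D where "\<forall>n>D. hh A B n = 0" using base_case[OF empty(2-4)] empty(5) by auto
  then obtain p where "Abs_fps (hh A B) = fps_of_poly p" using fps_fin[of D "hh A B"] by auto
  then show ?case by (auto simp: PiV_def)
next
  case (insert i V)
  have i: "i < Suc k" using insert by auto
  note A = insert(5) and B = insert(6) and BA = insert(7)
  define K where "K = Kset A B i"
  define I where "I = Iset A B i"
  note KG = K_good[OF A B BA i, folded K_def] and IG = I_good[OF A B BA i, folded I_def]
  have "\<exists>p. Abs_fps (hh A I) * PiV V = fps_of_poly p"
  proof (rule insert.IH)
    show "V \<subseteq> {..<Suc k}" using insert by auto
    show "good A" "good I" "I \<subseteq> A" using A IG by auto
    fix j assume j: "j < Suc k" "j \<notin> V"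
    show "ops j ` A \<subseteq> I"
    proof (cases "j = i")
      case True
      show ?thesis
      proof
        fix x assume "x \<in> ops j ` A"
        then obtain a where a: "a \<in> A" "x = ops i a" using True by auto
        then have "x = ops i a \<oplus>\<^bsub>M\<^esub> \<zero>\<^bsub>M\<^esub>" using ops_car[OF i] good_car[OF A] by simp
        then show "x \<in> I" using a good_zero[OF B] unfolding I_def Iset_def by blast
      qed
    next
      case False
      then show ?thesis using insert(8)[of j] j IG by auto
    qed
  qed
  then obtain p1 where p1: "Abs_fps (hh A I) * PiV V = fps_of_poly p1" by blast
  have "\<exists>p. Abs_fps (hh K B) * PiV V = fps_of_poly p"
  proof (rule insert.IH)
    show "V \<subseteq> {..<Suc k}" using insert by auto
    show "good K" "good B" "B \<subseteq> K" using B KG by auto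
    fix j assume j: "j < Suc k" "j \<notin> V"
    show "ops j ` K \<subseteq> B"
    proof (cases "j = i")
      case True
      then show ?thesis by (auto simp: K_def Kset_def)
    next
      case False
      then show ?thesis using insert(8)[of j] j KG by auto
    qed
  qed
  then obtain p2 where p2: "Abs_fps (hh K B) * PiV V = fps_of_poly p2" by blast
  define d where "d = deg i"
  have d: "0 < d" using deg_pos d_def by simp
  have rec: "hh A B (n + d) - hh A B n = hh A I (n + d) - hh K B n" for n
  proof -
    have e: "lam (submod M (cmp A n)) + lam (submod M (cmp B (n + d)))
       = lam (submod M (cmp K n)) + lam (submod M (cmp I (n + d)))"
      using main_eq[OF lam A B BA i deg_pos] unfolding K_def I_def d_def .
    have "enn2real (lam (submod M (cmp A n))) + enn2real (lam (submod M (cmp B (n + d))))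
       = enn2real (lam (submod M (cmp K n))) + enn2real (lam (submod M (cmp I (n + d))))"
      using arg_cong[OF e, of enn2real] fin_good A B KG(1) IG(1)
      by (simp add: enn2real_add)
    then show ?thesis by (simp add: hh_def)
  qed
  obtain q where q: "Abs_fps (hh A B) * (1 - fps_X ^ d) = Abs_fps (hh A I) - fps_X ^ d * Abs_fps (hh K B) + fps_of_poly q"
    using fps_step[of d "hh A B" "hh A I" "hh K B", OF d rec] by blast
  obtain PV where PV: "PiV V = fps_of_poly PV" using PiV_poly by blast
  have "PiV (insert i V) = (1 - fps_X ^ d) * PiV V" using insert(1,2) by (simp add: PiV_def d_def)
  then have "Abs_fps (hh A B) * PiV (insert i V) = (Abs_fps (hh A B) * (1 - fps_X ^ d)) * PiV V"
    by (simp add: mult.assoc)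
  also have "\<dots> = (Abs_fps (hh A I) - fps_X ^ d * Abs_fps (hh K B) + fps_of_poly q) * PiV V"
    by (simp only: q)
  also have "\<dots> = Abs_fps (hh A I) * PiV V - fps_X ^ d * (Abs_fps (hh K B) * PiV V) + fps_of_poly q * PiV V"
    by (simp add: algebra_simps)
  also have "\<dots> = fps_of_poly (p1 - monom 1 d * p2 + q * PV)"
    using p1 p2 by (simp add: PV fps_of_poly_diff fps_of_poly_add fps_of_poly_mult fps_of_poly_monom')
  finally show ?case by blast
qed


lemma final:
  "\<exists>p. Abs_fps (\<lambda>n. enn2real (lam (submod M (cmp (carrier M) n))))
     = fps_of_poly p / ((1 - fps_X) * (\<Prod>i<k. 1 - fps_X ^ \<gamma> i))"
proof -
  obtain p where p: "Abs_fps (hh (carrier M) {\<zero>\<^bsub>M\<^esub>}) * PiV {..<Suc k} = fps_of_poly p"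
    using induct_main[of "{..<Suc k}" "carrier M" "{\<zero>\<^bsub>M\<^esub>}"] good_carrier good_zero_set M_zero_car
    by auto
  have c0: "cmp {\<zero>\<^bsub>M\<^esub>} n = {\<zero>\<^bsub>M\<^esub>}" for n by (auto simp: cmp_def M_zero)
  have m0: "Module.module R (submod M {\<zero>\<^bsub>M\<^esub>})"
    using submodule.submodule_is_module[OF good_sub[OF good_zero_set] MM] .
  have l0: "lam (submod M {\<zero>\<^bsub>M\<^esub>}) = 0"
    using lam m0 unfolding length_function_def by auto
  have hh: "hh (carrier M) {\<zero>\<^bsub>M\<^esub>} = (\<lambda>n. enn2real (lam (submod M (cmp (carrier M) n))))"
    by (auto simp: hh_def c0 l0)
  have Pi: "PiV {..<Suc k} = (1 - fps_X) * (\<Prod>i<k. 1 - fps_X ^ \<gamma> i)"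
    by (simp add: PiV_def deg_def)
  have nz: "PiV {..<Suc k} \<noteq> 0"
  proof -
    have "(1 - fps_X ^ deg j :: real fps) \<noteq> 0" for j
    proof -
      have "fps_nth (1 - fps_X ^ deg j :: real fps) 0 = 1" using deg_pos[of j] by simp
      then show ?thesis by (metis fps_zero_nth zero_neq_one)
    qed
    then show ?thesis by (simp add: PiV_def)
  qed
  have "Abs_fps (hh (carrier M) {\<zero>\<^bsub>M\<^esub>}) = fps_of_poly p / PiV {..<Suc k}"
    using p nz by (metis nonzero_mult_div_cancel_right)
  then show ?thesis using hh Pi by auto
qed

end
theorem theorem4p2:
  fixes R :: "'r ring"
    and lam1 :: "('r, 'm) module \<Rightarrow> ennreal"
    and lam2 :: "('r, nat \<Rightarrow> 'm) module \<Rightarrow> ennreal"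
    and N :: "('r, 'm) module"
    and k :: nat
    and X :: "nat \<Rightarrow> 'm \<Rightarrow> 'm"
    and \<gamma> :: "nat \<Rightarrow> nat"
    and Nf :: "nat \<Rightarrow> 'm set"
  assumes R: "cring R"
    and lam1: "length_function R lam1"
    and lam2: "length_function R lam2"
    and compat: "length_compatible R lam1 lam2"
    and N: "poly_module R N k X"
    and filt: "incr_filtering R N k X \<gamma> Nf"
  shows "(\<lambda>n. lam1 (submod N (Nf n))) = (\<lambda>n. lam2 (submod (rees N Nf) (rees_component N Nf n)))
    \<and> ((\<forall>i<k. \<gamma> i > 0) \<and> (\<forall>n. lam1 (submod N (Nf n)) < \<infinity>)
         \<and> noetherian_poly_module R (rees N Nf) (Suc k) (rees_ops N k X \<gamma>)
       \<longrightarrow> (\<exists>p :: real poly.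
             Abs_fps (\<lambda>n. enn2real (lam1 (submod N (Nf n))))
             = fps_of_poly p / ((1 - fps_X) * (\<Prod>i<k. 1 - fps_X ^ \<gamma> i))))"
proof -
  interpret hs R N k X \<gamma> Nf using N filt by unfold_locales
  have rc: "rees_component N Nf n = cmp (carrier M) n" for n by (simp add: rees_component_def cmp_def)
  have P1: "(\<lambda>n. lam1 (submod N (Nf n))) = (\<lambda>n. lam2 (submod (rees N Nf) (rees_component N Nf n)))"
    using part1[OF compat] by auto
  show ?thesis
  proof (intro conjI impI)
    show "(\<lambda>n. lam1 (submod N (Nf n))) = (\<lambda>n. lam2 (submod (rees N Nf) (rees_component N Nf n)))" by (rule P1)
    assume H: "(\<forall>i<k. \<gamma> i > 0) \<and> (\<forall>n. lam1 (submod N (Nf n)) < \<infinity>)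
         \<and> noetherian_poly_module R (rees N Nf) (Suc k) (rees_ops N k X \<gamma>)"
    have eq: "lam1 (submod N (Nf n)) = lam2 (submod M (cmp (carrier M) n))" for n
      using fun_cong[OF P1, of n] rc by simp
    interpret hs2 R N k X \<gamma> Nf lam2
    proof unfold_locales
      show "length_function R lam2" by (rule lam2)
      show "lam2 (submod M (cmp (carrier M) n)) < \<infinity>" for n using H eq[of n] by metis
      show "0 < \<gamma> i" if "i < k" for i using H that by simp
      show "noetherian_poly_module R M (Suc k) ops" using H by simp
    qed
    show "\<exists>p :: real poly.
             Abs_fps (\<lambda>n. enn2real (lam1 (submod N (Nf n))))
             = fps_of_poly p / ((1 - fps_X) * (\<Prod>i<k. 1 - fps_X ^ \<gamma> i))"
      using final by (simp add: eq)
  qed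
qed

end
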